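(* Let $(x_n)$ be a bounded sequence and $(y_n)$ a weakly Cauchy sequence in a Banach space $X$. Then for every $\varepsilon\in(0,1)$ there is a subsequence $(n_k)$ with the following properties: - both $(x_{n_k})_k$ and $(x_{n_k}+y_{n_k})_k$ are $c_J$-stable; - $(1-\varepsilon)\,\tilde c_J(x_n)\le c_J(x_{n_k})\le\tilde c_J(x_n)$; - $c_J(x_{n_k}+y_{n_k})=c_J(x_{n_k})$.
   Context: For a bounded sequence $(x_n)$ in a Banach space, define $c_m=\inf\{\|\sum_{n\ge m}\alpha_n x_n\|: \sum_{n\ge m}|\alpha_n|=1\}$ and $c_J(x_n)=\sup_m c_m$. Passing to a subsequence does not decrease $c_J$. Define $\tilde c_J(x_n)=\sup\{c_J(x_{n_k}): (x_{n_k}) \text{ a subsequence of } (x_n)\}$. A sequence is called $c_J$-stable if $c_J(x_n)=\tilde c_J(x_n)$. *)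

theory Defs
  imports "HOL-Analysis.Analysis"
begin

definition c_m :: "(nat \<Rightarrow> 'a::banach) \<Rightarrow> nat \<Rightarrow> real" where
  "c_m x m = Inf {norm (\<Sum>n. \<alpha> n *\<^sub>R x n) | \<alpha>.
      (\<forall>n<m. \<alpha> n = 0) \<and> summable (\<lambda>n. \<bar>\<alpha> n\<bar>) \<and> (\<Sum>n. \<bar>\<alpha> n\<bar>) = 1}"

definition c_J :: "(nat \<Rightarrow> 'a::banach) \<Rightarrow> real" where
  "c_J x = (SUP m. c_m x m)"

definition c_J_tilde :: "(nat \<Rightarrow> 'a::banach) \<Rightarrow> real" where
  "c_J_tilde x = Sup {c_J (x \<circ> r) | r. strict_mono r}"

definition c_J_stable :: "(nat \<Rightarrow> 'a::banach) \<Rightarrow> bool" where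
  "c_J_stable x \<longleftrightarrow> c_J x = c_J_tilde x"

definition weakly_Cauchy :: "(nat \<Rightarrow> 'a::real_normed_vector) \<Rightarrow> bool" where
  "weakly_Cauchy y \<longleftrightarrow> (\<forall>f :: 'a \<Rightarrow> real. bounded_linear f \<longrightarrow> Cauchy (\<lambda>n. f (y n)))"

end

theory Submission
  imports Defs
begin

definition sublin :: "('a::real_vector \<Rightarrow> real) \<Rightarrow> bool" where
  "sublin q \<longleftrightarrow> (\<forall>u v. q (u + v) \<le> q u + q v) \<and> (\<forall>c u. 0 < c \<longrightarrow> q (c *\<^sub>R u) = c * q u)"

lemma sublin_add: "sublin q \<Longrightarrow> q (u + v) \<le> q u + q v"
  unfolding sublin_def by blast

lemma sublin_scale: "sublin q \<Longrightarrow> 0 < c \<Longrightarrow> q (c *\<^sub>R u) = c * q u"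
  unfolding sublin_def by blast

lemma sublin_0: "sublin q \<Longrightarrow> q 0 = 0"
  using sublin_scale[of q 2 0] by simp

lemma sublin_neg: "sublin q \<Longrightarrow> - q (- v) \<le> q v"
  using sublin_add[of q v "-v"] sublin_0[of q] by simp

lemma cone_inf:
  fixes q :: "'a::real_vector \<Rightarrow> real" and K :: "('a \<times> real) set"
  assumes sl: "sublin q" and K0: "(0,0) \<in> K"
    and Kadd: "\<And>k s k' s'. (k,s)\<in>K \<Longrightarrow> (k',s')\<in>K \<Longrightarrow> (k+k', s+s') \<in> K"
    and Kscale: "\<And>k s c. (k,s)\<in>K \<Longrightarrow> 0 < c \<Longrightarrow> (c *\<^sub>R k, c * s) \<in> K"
    and Kb: "\<And>k s. (k,s)\<in>K \<Longrightarrow> s \<le> q k"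
  defines "Q \<equiv> \<lambda>w. Inf ((\<lambda>(k,s). q (w+k) - s) ` K)"
  shows "sublin Q" "\<And>w. Q w \<le> q w" "\<And>w k s. (k,s)\<in>K \<Longrightarrow> Q w \<le> q (w+k) - s"
proof -
  have ne: "(\<lambda>(k,s). q (w+k) - s) ` K \<noteq> {}" for w using K0 by blast
  have lb: "- q (-w) \<le> q (w+k) - s" if "(k,s) \<in> K" for w k s
  proof -
    have "q k \<le> q (w+k) + q (-w)" using sublin_add[OF sl, of "w+k" "-w"] by simp
    then show ?thesis using Kb[OF that] by linarith
  qed
  have bdd: "bdd_below ((\<lambda>(k,s). q (w+k) - s) ` K)" for w
    unfolding bdd_below_def using lb by fast
  show low: "Q w \<le> q (w+k) - s" if "(k,s)\<in>K" for w k s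
    unfolding Q_def by (rule cInf_lower[OF _ bdd]) (use that in force)
  have gr: "z \<le> Q w" if "\<And>k s. (k,s)\<in>K \<Longrightarrow> z \<le> q (w+k) - s" for z w
    unfolding Q_def by (rule cInf_greatest[OF ne]) (use that in force)
  show "Q w \<le> q w" for w using low[OF K0, of w] sublin_0[OF sl] by simp
  show "sublin Q" unfolding sublin_def
  proof (intro conjI allI impI)
    fix u v
    have "Q (u+v) - (q (v+k') - s') \<le> Q u" if "(k',s')\<in>K" for k' s'
    proof (rule gr)
      fix k s assume ks: "(k,s)\<in>K"
      have "Q (u+v) \<le> q (u+v+(k+k')) - (s+s')" using low[OF Kadd[OF ks that]] .
      also have "\<dots> \<le> (q (u+k) - s) + (q (v+k') - s')"
        using sublin_add[OF sl, of "u+k" "v+k'"] by (simp add: algebra_simps)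
      finally show "Q (u+v) - (q (v+k') - s') \<le> q (u+k) - s" by simp
    qed
    then have "Q (u+v) - Q u \<le> Q v" by (intro gr) force
    then show "Q (u+v) \<le> Q u + Q v" by simp
  next
    fix c :: real and u assume c: "0 < c"
    have 1: "Q (c *\<^sub>R u) / c \<le> Q u"
    proof (rule gr)
      fix k s assume ks: "(k,s)\<in>K"
      have "Q (c *\<^sub>R u) \<le> q (c *\<^sub>R u + c *\<^sub>R k) - c * s" using low[OF Kscale[OF ks c]] .
      also have "\<dots> = c * (q (u+k) - s)"
        using sublin_scale[OF sl c, of "u+k"] by (simp add: algebra_simps scaleR_add_right)
      finally show "Q (c *\<^sub>R u) / c \<le> q (u+k) - s" using c by (simp add: divide_simps mult.commute)
    qed
    have 2: "c * Q u \<le> Q (c *\<^sub>R u)"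
    proof (rule gr)
      fix k s assume ks: "(k,s)\<in>K"
      have ic: "0 < inverse c" using c by simp
      have "c * Q u \<le> c * (q (u + inverse c *\<^sub>R k) - inverse c * s)"
        using low[OF Kscale[OF ks ic], of u] c by simp
      also have "\<dots> = q (c *\<^sub>R (u + inverse c *\<^sub>R k)) - s"
        using sublin_scale[OF sl c, of "u + inverse c *\<^sub>R k"] c by (simp add: algebra_simps)
      also have "c *\<^sub>R (u + inverse c *\<^sub>R k) = c *\<^sub>R u + k" using c by (simp add: scaleR_add_right)
      finally show "c * Q u \<le> q (c *\<^sub>R u + k) - s" .
    qed
    from 1 2 c show "Q (c *\<^sub>R u) = c * Q u" by (simp add: divide_simps mult.commute)
  qed
qed

lemma ray_cone:
  fixes a :: "'a::real_vector" and b :: real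
  shows "(0,0) \<in> (\<lambda>t. (t *\<^sub>R a, t * b)) ` {0..}"
    "\<And>k s k' s'. (k,s) \<in> (\<lambda>t. (t *\<^sub>R a, t * b)) ` {0..} \<Longrightarrow> (k',s') \<in> (\<lambda>t. (t *\<^sub>R a, t * b)) ` {0..}
       \<Longrightarrow> (k+k', s+s') \<in> (\<lambda>t. (t *\<^sub>R a, t * b)) ` {0..}"
    "\<And>k s c. (k,s) \<in> (\<lambda>t. (t *\<^sub>R a, t * b)) ` {0..} \<Longrightarrow> 0 < c
       \<Longrightarrow> (c *\<^sub>R k, c * s) \<in> (\<lambda>t. (t *\<^sub>R a, t * b)) ` {0..}"
    "(a, b) \<in> (\<lambda>t. (t *\<^sub>R a, t * b)) ` {0..}"
proof -
  show "(0,0) \<in> (\<lambda>t. (t *\<^sub>R a, t * b)) ` {0..}" by (rule image_eqI[where x=0]) auto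
  show "(a, b) \<in> (\<lambda>t. (t *\<^sub>R a, t * b)) ` {0..}" by (rule image_eqI[where x=1]) auto
  fix k s k' s' assume "(k,s) \<in> (\<lambda>t. (t *\<^sub>R a, t * b)) ` {0..}" "(k',s') \<in> (\<lambda>t. (t *\<^sub>R a, t * b)) ` {0..}"
  then obtain t t' where "0 \<le> t" "0 \<le> t'" "k = t *\<^sub>R a" "s = t * b" "k' = t' *\<^sub>R a" "s' = t' * b" by auto
  then show "(k+k', s+s') \<in> (\<lambda>t. (t *\<^sub>R a, t * b)) ` {0..}"
    by (intro image_eqI[where x="t+t'"]) (auto simp: algebra_simps)
next
  fix k s c assume "(k,s) \<in> (\<lambda>t. (t *\<^sub>R a, t * b)) ` {0..}" "0 < (c::real)"
  then obtain t where "0 \<le> t" "k = t *\<^sub>R a" "s = t * b" by auto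
  then show "(c *\<^sub>R k, c * s) \<in> (\<lambda>t. (t *\<^sub>R a, t * b)) ` {0..}"
    using \<open>0 < c\<close> by (intro image_eqI[where x="c*t"]) auto
qed

lemma HB:
  fixes p :: "'a::real_vector \<Rightarrow> real"
  assumes sp: "sublin p"
  shows "\<exists>g. linear g \<and> (\<forall>v. g v \<le> p v)"
proof -
  define A where "A = {q. sublin q \<and> (\<forall>v. q v \<le> p v)}"
  define P where "P = (\<lambda>a b::'a\<Rightarrow>real. \<forall>v. b v \<le> a v)"
  have po: "partial_order_on A (relation_of P A)"
    unfolding partial_order_on_def preorder_on_def refl_on_def trans_def antisym_def relation_of_def P_def
    by (auto intro: order_trans simp: fun_eq_iff intro: order_antisym)
  have ch: "\<exists>u \<in> A. \<forall>a \<in> C. P a u" if C: "C \<in> Chains (relation_of P A)" for C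
  proof (cases "C = {}")
    case True
    then show ?thesis using sp unfolding A_def by auto
  next
    case False
    have CA: "C \<subseteq> A" using C unfolding Chains_def relation_of_def by auto
    have tot: "\<And>a b. a \<in> C \<Longrightarrow> b \<in> C \<Longrightarrow> P a b \<or> P b a"
      using C unfolding Chains_def relation_of_def by auto
    have slC: "\<And>a. a \<in> C \<Longrightarrow> sublin a" and leC: "\<And>a v. a \<in> C \<Longrightarrow> a v \<le> p v"
      using CA unfolding A_def by auto
    define u where "u = (\<lambda>v. Inf ((\<lambda>q. q v) ` C))"
    have ne: "(\<lambda>q. q v) ` C \<noteq> {}" for v using False by blast
    have bdd: "bdd_below ((\<lambda>q. q v) ` C)" for v
    proof -
      have "- p (-v) \<le> q v" if "q \<in> C" for q
        using sublin_neg[OF slC[OF that], of v] leC[OF that, of "-v"] by linarith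
      then show ?thesis unfolding bdd_below_def by blast
    qed
    have low: "u v \<le> q v" if "q \<in> C" for q v
      unfolding u_def by (rule cInf_lower[OF _ bdd]) (use that in blast)
    have gr: "z \<le> u v" if "\<And>q. q \<in> C \<Longrightarrow> z \<le> q v" for z v
      unfolding u_def by (rule cInf_greatest[OF ne]) (use that in blast)
    have "sublin u" unfolding sublin_def
    proof (intro conjI allI impI)
      fix x y
      have "u (x+y) - q2 y \<le> u x" if q2: "q2 \<in> C" for q2
      proof (rule gr)
        fix q1 assume q1: "q1 \<in> C"
        show "u (x+y) - q2 y \<le> q1 x"
        proof (cases "P q1 q2")
          case True
          have "u (x+y) \<le> q2 (x+y)" by (rule low[OF q2])
          also have "\<dots> \<le> q2 x + q2 y" by (rule sublin_add[OF slC[OF q2]])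
          finally show ?thesis using True unfolding P_def by (smt (verit))
        next
          case False
          then have "P q2 q1" using tot[OF q1 q2] by blast
          have "u (x+y) \<le> q1 (x+y)" by (rule low[OF q1])
          also have "\<dots> \<le> q1 x + q1 y" by (rule sublin_add[OF slC[OF q1]])
          finally show ?thesis using \<open>P q2 q1\<close> unfolding P_def by (smt (verit))
        qed
      qed
      then have "u (x+y) - u x \<le> u y" by (intro gr) (smt (verit))
      then show "u (x+y) \<le> u x + u y" by simp
    next
      fix c :: real and x assume c: "0 < c"
      have 1: "u (c *\<^sub>R x) / c \<le> u x"
      proof (rule gr)
        fix q assume q: "q \<in> C"
        have "u (c *\<^sub>R x) \<le> c * q x" using low[OF q, of "c *\<^sub>R x"] sublin_scale[OF slC[OF q] c] by simp
        then show "u (c *\<^sub>R x) / c \<le> q x" using c by (simp add: divide_simps mult.commute)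
      qed
      have 2: "c * u x \<le> u (c *\<^sub>R x)"
      proof (rule gr)
        fix q assume q: "q \<in> C"
        have "c * u x \<le> c * q x" using low[OF q, of x] c by simp
        then show "c * u x \<le> q (c *\<^sub>R x)" using sublin_scale[OF slC[OF q] c] by simp
      qed
      from 1 2 c show "u (c *\<^sub>R x) = c * u x" by (simp add: divide_simps mult.commute)
    qed
    moreover have "u v \<le> p v" for v
    proof -
      obtain q where "q \<in> C" using False by blast
      then show ?thesis using low[of q v] leC[of q v] by simp
    qed
    ultimately have "u \<in> A" unfolding A_def by blast
    moreover have "\<forall>a \<in> C. P a u" unfolding P_def using low by blast
    ultimately show ?thesis by blast
  qed
  obtain m where mA: "m \<in> A" and mmin: "\<And>a. a \<in> A \<Longrightarrow> P m a \<Longrightarrow> a = m"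
    using predicate_Zorn[OF po ch] by blast
  have slm: "sublin m" and mp: "\<And>v. m v \<le> p v" using mA unfolding A_def by auto
  have mneg: "m (-v) = - m v" for v
  proof -
    define K where "K = (\<lambda>t. (t *\<^sub>R v, t * m v)) ` {0..}"
    note K0 = ray_cone(1)[of v "m v", folded K_def]
    note Kadd = ray_cone(2)[of _ _ v "m v", folded K_def]
    note Kscale = ray_cone(3)[of _ _ v "m v", folded K_def]
    have Kb: "s \<le> m k" if ks: "(k,s)\<in>K" for k s
    proof -
      obtain t where t: "0 \<le> t" "k = t *\<^sub>R v" "s = t * m v" using ks unfolding K_def by fastforce
      show ?thesis
      proof (cases "t = 0")
        case True then show ?thesis using t sublin_0[OF slm] by simp
      next
        case False then show ?thesis using t sublin_scale[OF slm, of t v] by simp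
      qed
    qed
    define Q where "Q = (\<lambda>w. Inf ((\<lambda>(k,s). m (w+k) - s) ` K))"
    have ci1: "sublin Q" unfolding Q_def by (rule cone_inf(1)[of m K]) (fact slm K0 Kadd Kscale Kb)+
    have ci2: "Q w \<le> m w" for w unfolding Q_def by (rule cone_inf(2)[of m K]) (fact slm K0 Kadd Kscale Kb)+
    have ci3: "Q w \<le> m (w+k) - s" if "(k,s) \<in> K" for w k s
      unfolding Q_def by (rule cone_inf(3)[of m K]) (fact slm K0 Kadd Kscale Kb that)+
    have "Q w \<le> p w" for w using ci2[of w] mp[of w] by linarith
    then have "Q \<in> A" unfolding A_def using ci1 by blast
    moreover have "P m Q" unfolding P_def using ci2 by blast
    ultimately have "Q = m" using mmin by blast
    moreover have "(1 *\<^sub>R v, 1 * m v) \<in> K" using ray_cone(4)[of v "m v", folded K_def] by simp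
    ultimately have "m (-v) \<le> m (-v + v) - m v" using ci3[of "v" "m v" "-v"] by simp
    then have "m (-v) \<le> - m v" using sublin_0[OF slm] by simp
    then show ?thesis using sublin_neg[OF slm, of v] by linarith
  qed
  have "linear m"
  proof (rule linearI)
    fix x y
    have "m (-x) + m (-y) \<ge> m (-x + -y)" using sublin_add[OF slm] by blast
    then have "m x + m y \<le> m (x+y)" using mneg[of x] mneg[of y] mneg[of "x+y"] by (simp add: algebra_simps)
    then show "m (x+y) = m x + m y" using sublin_add[OF slm, of x y] by linarith
  next
    fix c :: real and x
    show "m (c *\<^sub>R x) = c *\<^sub>R m x"
    proof (cases "c > 0")
      case True then show ?thesis using sublin_scale[OF slm] by simp
    next
      case False
      show ?thesis
      proof (cases "c = 0")
        case True then show ?thesis using sublin_0[OF slm] by simp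
      next
        case False
        with \<open>\<not> c > 0\<close> have "-c > 0" by simp
        have "m (c *\<^sub>R x) = m (- ((-c) *\<^sub>R x))" by simp
        also have "\<dots> = - m ((-c) *\<^sub>R x)" by (rule mneg)
        also have "\<dots> = c * m x" using sublin_scale[OF slm \<open>-c > 0\<close>, of x] by simp
        finally show ?thesis by simp
      qed
    qed
  qed
  then show ?thesis using mp by blast
qed

lemma sublin_norm: "sublin (norm :: 'a::real_normed_vector \<Rightarrow> real)"
  unfolding sublin_def by (auto simp: norm_triangle_ineq)

lemma norming:
  fixes v :: "'a::real_normed_vector"
  shows "\<exists>f. bounded_linear f \<and> (\<forall>w. \<bar>f w\<bar> \<le> norm w) \<and> f v = norm v"
proof -
  define K where "K = (\<lambda>t. (t *\<^sub>R v, t * norm v)) ` {0..}"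
  note K0 = ray_cone(1)[of v "norm v", folded K_def]
  note Kadd = ray_cone(2)[of _ _ v "norm v", folded K_def]
  note Kscale = ray_cone(3)[of _ _ v "norm v", folded K_def]
  have Kb: "s \<le> norm k" if "(k,s)\<in>K" for k s
    using that unfolding K_def by auto
  define Q where "Q = (\<lambda>w. Inf ((\<lambda>(k,s). norm (w+k) - s) ` K))"
  have ci1: "sublin Q" unfolding Q_def by (rule cone_inf(1)[of norm K]) (fact sublin_norm K0 Kadd Kscale Kb)+
  have ci2: "Q w \<le> norm w" for w unfolding Q_def by (rule cone_inf(2)[of norm K]) (fact sublin_norm K0 Kadd Kscale Kb)+
  have ci3: "Q w \<le> norm (w+k) - s" if "(k,s) \<in> K" for w k s
    unfolding Q_def by (rule cone_inf(3)[of norm K]) (fact sublin_norm K0 Kadd Kscale Kb that)+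
  obtain g where g: "linear g" "\<And>w. g w \<le> Q w" using HB[OF ci1] by blast
  have gn: "g w \<le> norm w" for w using g(2)[of w] ci2[of w] unfolding Q_def by simp
  have ga: "\<bar>g w\<bar> \<le> norm w" for w
    using gn[of w] gn[of "-w"] linear_neg[OF g(1), of w] by simp
  have "(1 *\<^sub>R v, 1 * norm v) \<in> K" using ray_cone(4)[of v "norm v", folded K_def] by simp
  then have "g (-v) \<le> norm (-v + v) - norm v" using g(2)[of "-v"] ci3[of v "norm v" "-v"] unfolding Q_def by simp
  then have "g v \<ge> norm v" using linear_neg[OF g(1), of v] by simp
  then have "g v = norm v" using gn[of v] by simp
  moreover have "bounded_linear g"
    by (rule bounded_linear_intro[where K=1]) (use g(1) ga in \<open>auto simp: linear_add linear_scale\<close>)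
  ultimately show ?thesis using ga by blast
qed



lemma sum_if_less:
  fixes f :: "nat \<Rightarrow> 'b::comm_monoid_add"
  assumes "J1 \<le> J" shows "(\<Sum>j<J. if j < J1 then f j else 0) = (\<Sum>j<J1. f j)"
proof -
  have "(\<Sum>j<J. if j < J1 then f j else 0) = (\<Sum>j\<in>{..<J} \<inter> {..<J1}. f j)"
    by (simp add: sum.inter_restrict lessThan_def)
  also have "{..<J} \<inter> {..<J1} = {..<J1}" using assms by auto
  finally show ?thesis .
qed

lemma mazur:
  fixes u :: "nat \<Rightarrow> 'a::real_normed_vector"
  assumes wn: "\<And>f :: 'a \<Rightarrow> real. bounded_linear f \<Longrightarrow> (\<lambda>j. f (u j)) \<longlonglongrightarrow> 0" and d: "0 < \<delta>"
  shows "\<exists>J l. (\<forall>j. 0 \<le> l j) \<and> (\<Sum>j<J. l j) = 1 \<and> norm (\<Sum>j<J. l j *\<^sub>R u j) < \<delta>"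
proof (rule ccontr)
  assume H0: "\<not> ?thesis"
  have H: "\<delta> * (\<Sum>j<J. l j) \<le> norm (\<Sum>j<J. l j *\<^sub>R u j)" if l: "\<forall>j. 0 \<le> l j" for J l
  proof (cases "(\<Sum>j<J. l j) = 0")
    case True then show ?thesis by simp
  next
    case False
    define S where "S = (\<Sum>j<J. l j)"
    have Sp: "S > 0" using False l sum_nonneg[of "{..<J}" l] unfolding S_def by force
    have "(\<Sum>j<J. l j / S) = 1" using Sp unfolding S_def by (simp add: sum_divide_distrib[symmetric])
    moreover have "\<forall>j. 0 \<le> l j / S" using l Sp by simp
    ultimately have "\<delta> \<le> norm (\<Sum>j<J. (l j / S) *\<^sub>R u j)" using H0 by (meson not_le)
    also have "(\<Sum>j<J. (l j / S) *\<^sub>R u j) = (1/S) *\<^sub>R (\<Sum>j<J. l j *\<^sub>R u j)"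
      by (simp add: scaleR_sum_right)
    finally have "\<delta> \<le> (1/S) * norm (\<Sum>j<J. l j *\<^sub>R u j)" using Sp by simp
    then show ?thesis using Sp unfolding S_def[symmetric] by (simp add: field_simps)
  qed
  define K where "K = {(- (\<Sum>j<J. l j *\<^sub>R u j), \<delta> * (\<Sum>j<J. l j)) | J l. \<forall>j. 0 \<le> l j}"
  have K0: "(0,0) \<in> K" unfolding K_def by (rule CollectI, rule exI[where x=0], rule exI[where x="\<lambda>_. 0"]) simp
  have Kadd: "(k+k', s+s') \<in> K" if h1: "(k,s)\<in>K" and h2: "(k',s')\<in>K" for k s k' s'
  proof -
    obtain J l where 1: "\<forall>j. 0 \<le> l j" "k = - (\<Sum>j<J. l j *\<^sub>R u j)" "s = \<delta> * (\<Sum>j<J. l j)"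
      using h1 unfolding K_def by auto
    obtain J' l' where 2: "\<forall>j. 0 \<le> l' j" "k' = - (\<Sum>j<J'. l' j *\<^sub>R u j)" "s' = \<delta> * (\<Sum>j<J'. l' j)"
      using h2 unfolding K_def by auto
    define L where "L = (\<lambda>j. (if j < J then l j else 0) + (if j < J' then l' j else 0))"
    define M where "M = max J J'"
    have a: "(\<Sum>j<M. L j *\<^sub>R u j) = (\<Sum>j<J. l j *\<^sub>R u j) + (\<Sum>j<J'. l' j *\<^sub>R u j)"
    proof -
      have "(\<Sum>j<M. L j *\<^sub>R u j) = (\<Sum>j<M. (if j < J then l j *\<^sub>R u j else 0) + (if j < J' then l' j *\<^sub>R u j else 0))"
        unfolding L_def by (rule sum.cong) (auto simp: scaleR_add_left)
      also have "\<dots> = (\<Sum>j<M. if j < J then l j *\<^sub>R u j else 0) + (\<Sum>j<M. if j < J' then l' j *\<^sub>R u j else 0)"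
        by (rule sum.distrib)
      also have "\<dots> = (\<Sum>j<J. l j *\<^sub>R u j) + (\<Sum>j<J'. l' j *\<^sub>R u j)"
        using sum_if_less[of J M "\<lambda>j. l j *\<^sub>R u j"] sum_if_less[of J' M "\<lambda>j. l' j *\<^sub>R u j"] unfolding M_def by simp
      finally show ?thesis .
    qed
    have b: "(\<Sum>j<M. L j) = (\<Sum>j<J. l j) + (\<Sum>j<J'. l' j)"
    proof -
      have "(\<Sum>j<M. L j) = (\<Sum>j<M. if j < J then l j else 0) + (\<Sum>j<M. if j < J' then l' j else 0)"
        unfolding L_def by (rule sum.distrib)
      also have "\<dots> = (\<Sum>j<J. l j) + (\<Sum>j<J'. l' j)"
        using sum_if_less[of J M l] sum_if_less[of J' M l'] unfolding M_def by simp
      finally show ?thesis .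
    qed
    have c: "\<forall>j. 0 \<le> L j" using 1(1) 2(1) unfolding L_def by simp
    have e1: "k + k' = - (\<Sum>j<M. L j *\<^sub>R u j)" using a 1(2) 2(2) by simp
    have e2: "s + s' = \<delta> * (\<Sum>j<M. L j)" using b 1(3) 2(3) by (simp add: distrib_left)
    show ?thesis unfolding K_def by (rule CollectI, rule exI[where x=M], rule exI[where x=L]) (use c e1 e2 in simp)
  qed
  have Kscale: "(c *\<^sub>R k, c * s) \<in> K" if h1: "(k,s)\<in>K" and h2: "0 < c" for k s c
  proof -
    obtain J l where 1: "\<forall>j. 0 \<le> l j" "k = - (\<Sum>j<J. l j *\<^sub>R u j)" "s = \<delta> * (\<Sum>j<J. l j)"
      using h1 unfolding K_def by auto
    show ?thesis unfolding K_def
      by (rule CollectI, rule exI[where x=J], rule exI[where x="\<lambda>j. c * l j"])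
        (use 1 h2 in \<open>simp add: scaleR_sum_right sum_distrib_left algebra_simps\<close>)
  qed
  have Kb: "s \<le> norm k" if h1: "(k,s)\<in>K" for k s
  proof -
    obtain J l where 1: "\<forall>j. 0 \<le> l j" "k = - (\<Sum>j<J. l j *\<^sub>R u j)" "s = \<delta> * (\<Sum>j<J. l j)"
      using h1 unfolding K_def by auto
    show ?thesis using H[OF 1(1)] 1 by simp
  qed
  define Q where "Q = (\<lambda>w. Inf ((\<lambda>(k,s). norm (w+k) - s) ` K))"
  have ci1: "sublin Q" unfolding Q_def by (rule cone_inf(1)[of norm K]) (fact sublin_norm K0 Kadd Kscale Kb)+
  have ci2: "Q w \<le> norm w" for w unfolding Q_def by (rule cone_inf(2)[of norm K]) (fact sublin_norm K0 Kadd Kscale Kb)+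
  have ci3: "Q w \<le> norm (w+k) - s" if "(k,s) \<in> K" for w k s
    unfolding Q_def by (rule cone_inf(3)[of norm K]) (fact sublin_norm K0 Kadd Kscale Kb that)+
  obtain g where g: "linear g" "\<And>w. g w \<le> Q w" using HB[OF ci1] by blast
  have gn: "g w \<le> norm w" for w using g(2)[of w] ci2[of w] by simp
  have ga: "\<bar>g w\<bar> \<le> norm w" for w
    using gn[of w] gn[of "-w"] linear_neg[OF g(1), of w] by simp
  have bl: "bounded_linear g"
    by (rule bounded_linear_intro[where K=1]) (use g(1) ga in \<open>auto simp: linear_add linear_scale\<close>)
  have gu: "g (u j) \<le> - \<delta>" for j
  proof -
    define e where "e = (\<lambda>i. if i = j then 1 else (0::real))"
    have "(\<Sum>i<Suc j. e i *\<^sub>R u i) = u j" unfolding e_def by (simp add: if_distrib cong: if_cong)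
    moreover have "(\<Sum>i<Suc j. e i) = 1" unfolding e_def by simp
    moreover have "\<forall>i. 0 \<le> e i" unfolding e_def by simp
    ultimately have "(- u j, \<delta>) \<in> K" unfolding K_def
      by - (rule CollectI, rule exI[where x="Suc j"], rule exI[where x=e], simp)
    then have "Q (u j) \<le> norm (u j + - u j) - \<delta>" by (rule ci3)
    then show ?thesis using g(2)[of "u j"] by simp
  qed
  have "(\<lambda>j. g (u j)) \<longlonglongrightarrow> 0" by (rule wn[OF bl])
  then have "0 \<le> - \<delta>" by (rule LIMSEQ_le_const2) (use gu in auto)
  then show False using d by simp
qed



definition cmset :: "(nat \<Rightarrow> 'a::banach) \<Rightarrow> nat \<Rightarrow> real set" where
  "cmset x m = {norm (\<Sum>n. \<alpha> n *\<^sub>R x n) | \<alpha>.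
      (\<forall>n<m. \<alpha> n = 0) \<and> summable (\<lambda>n. \<bar>\<alpha> n\<bar>) \<and> (\<Sum>n. \<bar>\<alpha> n\<bar>) = 1}"

lemma c_m_cmset: "c_m x m = Inf (cmset x m)"
  unfolding c_m_def cmset_def by simp

lemma cmset_bdd: "bdd_below (cmset x m)"
  unfolding cmset_def bdd_below_def by (rule exI[where x=0]) auto

lemma sum_lessThan_shift0:
  fixes f :: "nat \<Rightarrow> 'b::comm_monoid_add"
  assumes "\<And>i. i < M \<Longrightarrow> f i = 0" "M \<le> N"
  shows "(\<Sum>i<N. f i) = (\<Sum>i\<in>{M..<N}. f i)"
  by (rule sum.mono_neutral_right) (use assms in auto)

lemma fin_in_cmset:
  fixes z :: "nat \<Rightarrow> 'a::banach"
  assumes b: "(\<Sum>i\<in>{M..<N}. \<bar>\<beta> i\<bar>) = 1"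
  shows "norm (\<Sum>i\<in>{M..<N}. \<beta> i *\<^sub>R z i) \<in> cmset z M"
proof -
  define \<alpha> where "\<alpha> = (\<lambda>i. if M \<le> i \<and> i < N then \<beta> i else 0)"
  have s1: "(\<lambda>n. \<alpha> n *\<^sub>R z n) sums (\<Sum>i\<in>{M..<N}. \<alpha> i *\<^sub>R z i)"
    by (rule sums_finite) (auto simp: \<alpha>_def)
  have s2: "(\<lambda>n. \<bar>\<alpha> n\<bar>) sums (\<Sum>i\<in>{M..<N}. \<bar>\<alpha> i\<bar>)"
    by (rule sums_finite) (auto simp: \<alpha>_def)
  have e1: "(\<Sum>i\<in>{M..<N}. \<alpha> i *\<^sub>R z i) = (\<Sum>i\<in>{M..<N}. \<beta> i *\<^sub>R z i)"
    by (rule sum.cong) (auto simp: \<alpha>_def)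
  have e2: "(\<Sum>i\<in>{M..<N}. \<bar>\<alpha> i\<bar>) = 1"
    using b by (metis (no_types, lifting) \<alpha>_def atLeastLessThan_iff sum.cong)
  have "(\<forall>n<M. \<alpha> n = 0) \<and> summable (\<lambda>n. \<bar>\<alpha> n\<bar>) \<and> (\<Sum>n. \<bar>\<alpha> n\<bar>) = 1"
    using s2 e2 by (auto simp: \<alpha>_def sums_iff)
  moreover have "norm (\<Sum>i\<in>{M..<N}. \<beta> i *\<^sub>R z i) = norm (\<Sum>n. \<alpha> n *\<^sub>R z n)"
    using s1 e1 by (simp add: sums_iff)
  ultimately show ?thesis unfolding cmset_def by blast
qed

lemma cmset_ne: "cmset (z :: nat \<Rightarrow> 'a::banach) M \<noteq> {}"
proof -
  have "(\<Sum>i\<in>{M..<Suc M}. \<bar>(\<lambda>_. 1::real) i\<bar>) = 1" by simp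
  then have "norm (\<Sum>i\<in>{M..<Suc M}. (\<lambda>_. 1::real) i *\<^sub>R z i) \<in> cmset z M" by (rule fin_in_cmset)
  then show ?thesis by blast
qed

lemma cm_nonneg: "0 \<le> c_m z m"
  unfolding c_m_cmset by (rule cInf_greatest[OF cmset_ne]) (auto simp: cmset_def)

lemma cm_fin_upper:
  fixes z :: "nat \<Rightarrow> 'a::banach"
  assumes "(\<Sum>i\<in>{M..<N}. \<bar>\<beta> i\<bar>) = 1"
  shows "c_m z M \<le> norm (\<Sum>i\<in>{M..<N}. \<beta> i *\<^sub>R z i)"
  unfolding c_m_cmset by (rule cInf_lower[OF fin_in_cmset[OF assms] cmset_bdd])

lemma cm_le_norm: "c_m z m \<le> norm (z m)"
  using cm_fin_upper[where M=m and N="Suc m" and \<beta>="\<lambda>_. 1" and z=z] by simp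

lemma bounded_bound:
  assumes "bounded (range z)" obtains B where "\<And>n. norm (z n) \<le> B"
  using assms unfolding bounded_iff by blast

lemma cJ_upper:
  fixes z :: "nat \<Rightarrow> 'a::banach"
  assumes "bounded (range z)" shows "c_m z m \<le> c_J z"
proof -
  obtain B where B: "\<And>n. norm (z n) \<le> B" using bounded_bound[OF assms] by blast
  have bdd: "bdd_above (range (c_m z))"
    unfolding bdd_above_def using cm_le_norm B order_trans by blast
  show ?thesis unfolding c_J_def by (rule cSUP_upper[OF UNIV_I bdd])
qed

lemma cJ_least:
  assumes "\<And>m. c_m z m \<le> e" shows "c_J z \<le> e"
  unfolding c_J_def by (rule cSUP_least) (use assms in auto)

lemma cJ_bound:
  assumes "\<And>n. norm (z n) \<le> B" shows "c_J z \<le> B"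
  by (rule cJ_least) (use cm_le_norm assms order_trans in blast)

lemma cJ_nonneg:
  assumes "bounded (range z)" shows "0 \<le> c_J z"
  using cJ_upper[OF assms, of 0] cm_nonneg[of z 0] by simp

lemma sm_bounded: "bounded (range z) \<Longrightarrow> bounded (range (z \<circ> r))"
  by (rule bounded_subset) auto

lemma tilde_bdd:
  fixes z :: "nat \<Rightarrow> 'a::banach"
  assumes "bounded (range z)" shows "bdd_above {c_J (z \<circ> r) | r. strict_mono r}"
proof -
  obtain B where B: "\<And>n. norm (z n) \<le> B" using bounded_bound[OF assms] by blast
  have "c_J (z \<circ> r) \<le> B" for r by (rule cJ_bound) (use B in simp)
  then show ?thesis unfolding bdd_above_def by blast
qed

lemma tilde_upper:
  fixes z :: "nat \<Rightarrow> 'a::banach"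
  assumes "bounded (range z)" "strict_mono r" shows "c_J (z \<circ> r) \<le> c_J_tilde z"
  unfolding c_J_tilde_def by (rule cSup_upper[OF _ tilde_bdd[OF assms(1)]]) (use assms(2) in blast)

lemma tilde_least:
  fixes z :: "nat \<Rightarrow> 'a::banach"
  assumes "\<And>r. strict_mono r \<Longrightarrow> c_J (z \<circ> r) \<le> e" shows "c_J_tilde z \<le> e"
  unfolding c_J_tilde_def
  by (rule cSup_least) (use assms strict_mono_id in \<open>auto\<close>)

lemma cJ_le_tilde:
  fixes z :: "nat \<Rightarrow> 'a::banach"
  assumes "bounded (range z)" shows "c_J z \<le> c_J_tilde z"
  using tilde_upper[OF assms strict_mono_id] by simp

lemma cm_fin_approx:
  fixes z :: "nat \<Rightarrow> 'a::banach"
  assumes bz: "bounded (range z)" and lt: "c_m z M < e"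
  shows "\<exists>N>M. \<exists>\<beta>. (\<Sum>i\<in>{M..<N}. \<bar>\<beta> i\<bar>) = 1 \<and> norm (\<Sum>i\<in>{M..<N}. \<beta> i *\<^sub>R z i) < e"
proof -
  obtain B where B: "\<And>n. norm (z n) \<le> B" using bounded_bound[OF bz] by blast
  obtain a where "a \<in> cmset z M" "a < e" using cInf_lessD[OF cmset_ne lt[unfolded c_m_cmset]] by blast
  then obtain \<alpha> where a0: "\<forall>n<M. \<alpha> n = 0" and a1: "summable (\<lambda>n. \<bar>\<alpha> n\<bar>)" and a2: "(\<Sum>n. \<bar>\<alpha> n\<bar>) = 1"
    and ae: "norm (\<Sum>n. \<alpha> n *\<^sub>R z n) < e" unfolding cmset_def by blast
  have sz: "summable (\<lambda>n. \<alpha> n *\<^sub>R z n)"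
  proof (rule summable_comparison_test)
    show "\<exists>N. \<forall>n\<ge>N. norm (\<alpha> n *\<^sub>R z n) \<le> \<bar>\<alpha> n\<bar> * B"
      using B by (intro exI[where x=0] allI impI) (simp add: mult_left_mono)
    show "summable (\<lambda>n. \<bar>\<alpha> n\<bar> * B)" using a1 by (rule summable_mult2)
  qed
  define S where "S = (\<lambda>n. \<Sum>i<n. \<bar>\<alpha> i\<bar>)"
  define V where "V = (\<lambda>n. \<Sum>i<n. \<alpha> i *\<^sub>R z i)"
  have S1: "S \<longlonglongrightarrow> 1" unfolding S_def using summable_LIMSEQ[OF a1] a2 by simp
  have V1: "V \<longlonglongrightarrow> (\<Sum>n. \<alpha> n *\<^sub>R z n)" unfolding V_def using summable_LIMSEQ[OF sz] .
  have "(\<lambda>n. norm (V n) / S n) \<longlonglongrightarrow> norm (\<Sum>n. \<alpha> n *\<^sub>R z n) / 1"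
    by (intro tendsto_divide tendsto_norm V1 S1) simp
  then have ev1: "eventually (\<lambda>n. norm (V n) / S n < e) sequentially"
    using ae by (intro order_tendstoD(2)) auto
  have ev2: "eventually (\<lambda>n. 1/2 < S n) sequentially" using S1 by (intro order_tendstoD(1)) auto
  have ev3: "eventually (\<lambda>n. M < n) sequentially" by (rule eventually_gt_at_top)
  obtain N where N1: "norm (V N) / S N < e" and N2: "1/2 < S N" and N3: "M < N"
    using eventually_happens'[OF trivial_limit_sequentially eventually_conj[OF ev1 eventually_conj[OF ev2 ev3]]] by blast
  define \<beta> where "\<beta> = (\<lambda>i. \<alpha> i / S N)"
  have sS: "S N = (\<Sum>i\<in>{M..<N}. \<bar>\<alpha> i\<bar>)" unfolding S_def by (rule sum_lessThan_shift0) (use a0 N3 in auto)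
  have sV: "V N = (\<Sum>i\<in>{M..<N}. \<alpha> i *\<^sub>R z i)" unfolding V_def by (rule sum_lessThan_shift0) (use a0 N3 in auto)
  have "(\<Sum>i\<in>{M..<N}. \<bar>\<beta> i\<bar>) = 1"
    unfolding \<beta>_def using N2 sS by (simp add: sum_divide_distrib[symmetric])
  moreover have "(\<Sum>i\<in>{M..<N}. \<beta> i *\<^sub>R z i) = (1 / S N) *\<^sub>R V N"
    unfolding \<beta>_def sV by (simp add: scaleR_sum_right)
  then have "norm (\<Sum>i\<in>{M..<N}. \<beta> i *\<^sub>R z i) < e" using N1 N2 by simp
  ultimately show ?thesis using N3 by blast
qed



lemma reindex_sums:
  fixes f h :: "nat \<Rightarrow> 'b::{real_normed_vector}"
  assumes f0: "\<And>n. n < M \<Longrightarrow> f n = 0" and sm: "strict_mono (\<lambda>n. g (n + M))"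
    and hg: "\<And>n. M \<le> n \<Longrightarrow> h (g n) = f n"
    and h0: "\<And>i. (\<And>n. M \<le> n \<Longrightarrow> g n \<noteq> i) \<Longrightarrow> h i = 0"
  shows "f sums s \<longleftrightarrow> h sums s"
proof -
  have "(\<lambda>n. h (g (n + M))) sums s \<longleftrightarrow> h sums s"
  proof (rule sums_mono_reindex[OF sm])
    fix i assume i: "i \<notin> range (\<lambda>n. g (n + M))"
    show "h i = 0"
    proof (rule h0)
      fix n assume "M \<le> n"
      then have "g n = g ((n - M) + M)" by simp
      then show "g n \<noteq> i" using i by (metis rangeI)
    qed
  qed
  moreover have "(\<lambda>n. h (g (n + M))) = (\<lambda>n. f (n + M))" using hg by simp
  moreover have "(\<lambda>n. f (n + M)) sums s \<longleftrightarrow> f sums s"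
    using sums_iff_shift[of f M s] f0 by simp
  ultimately show ?thesis by simp
qed

lemma sub_le:
  fixes z :: "nat \<Rightarrow> 'a::banach"
  assumes bz: "bounded (range z)" and r: "strict_mono r" and r': "strict_mono r'"
    and ev: "\<And>j. K \<le> j \<Longrightarrow> r' j \<in> range r"
  shows "c_J (z \<circ> r) \<le> c_J (z \<circ> r')"
proof (rule cJ_least)
  fix m
  define M where "M = max K (r m)"
  define g where "g = (\<lambda>n. inv r (r' n))"
  have rg: "r (g n) = r' n" if "M \<le> n" for n
    unfolding g_def using ev[of n] that unfolding M_def by (auto simp: f_inv_into_f)
  have gsm: "strict_mono (\<lambda>n. g (n + M))"
  proof (rule strict_monoI)
    fix a b :: nat assume "a < b"
    then have "r' (a + M) < r' (b + M)" using r' by (simp add: strict_mono_less)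
    then have "r (g (a+M)) < r (g (b+M))" using rg by simp
    then show "g (a + M) < g (b + M)" using r by (simp add: strict_mono_less)
  qed
  have injr: "inj r" using r by (rule strict_mono_imp_inj_on)
  have injr': "inj r'" using r' by (rule strict_mono_imp_inj_on)
  have sub: "cmset (z \<circ> r') M \<subseteq> cmset (z \<circ> r) m"
  proof
    fix a assume "a \<in> cmset (z \<circ> r') M"
    then obtain \<alpha> where a0: "\<forall>n<M. \<alpha> n = 0" and a1: "summable (\<lambda>n. \<bar>\<alpha> n\<bar>)" and a2: "(\<Sum>n. \<bar>\<alpha> n\<bar>) = 1"
      and aa: "a = norm (\<Sum>n. \<alpha> n *\<^sub>R (z \<circ> r') n)" unfolding cmset_def by blast
    define \<beta> where "\<beta> = (\<lambda>i. if r i \<in> r' ` {M..} then \<alpha> (inv r' (r i)) else 0)"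
    have bg: "\<beta> (g n) = \<alpha> n" if "M \<le> n" for n
      unfolding \<beta>_def using rg[OF that] that injr' by auto
    have b0: "\<beta> i = 0" if "\<And>n. M \<le> n \<Longrightarrow> g n \<noteq> i" for i
    proof (cases "r i \<in> r' ` {M..}")
      case True
      then obtain n where n: "M \<le> n" "r i = r' n" by auto
      then have "g n = i" unfolding g_def by (simp add: n(2)[symmetric] inv_f_f[OF injr])
      then show ?thesis using that n by blast
    qed (simp add: \<beta>_def)
    have bm: "\<beta> i = 0" if "i < m" for i
    proof (cases "r i \<in> r' ` {M..}")
      case True
      then obtain n where n: "M \<le> n" "r i = r' n" by auto
      have "n \<le> r' n" using r' by (rule seq_suble)
      moreover have "r i < r m" using that r by (simp add: strict_mono_less)
      ultimately show ?thesis using n unfolding M_def by simp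
    qed (simp add: \<beta>_def)
    have s1: "(\<lambda>n. \<bar>\<alpha> n\<bar>) sums 1" using a1 a2 summable_sums by fastforce
    have "(\<lambda>n. \<bar>\<beta> n\<bar>) sums 1"
      using reindex_sums[of M "\<lambda>n. \<bar>\<alpha> n\<bar>" g "\<lambda>i. \<bar>\<beta> i\<bar>" 1] a0 gsm bg b0 s1 by simp
    then have b1: "summable (\<lambda>n. \<bar>\<beta> n\<bar>)" "(\<Sum>n. \<bar>\<beta> n\<bar>) = 1" by (auto simp: sums_iff)
    obtain B where B: "\<And>n. norm (z n) \<le> B" using bounded_bound[OF bz] by blast
    have sz: "summable (\<lambda>n. \<alpha> n *\<^sub>R (z \<circ> r') n)"
    proof (rule summable_comparison_test)
      show "\<exists>N. \<forall>n\<ge>N. norm (\<alpha> n *\<^sub>R (z \<circ> r') n) \<le> \<bar>\<alpha> n\<bar> * B"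
        using B by (intro exI[where x=0] allI impI) (simp add: mult_left_mono)
      show "summable (\<lambda>n. \<bar>\<alpha> n\<bar> * B)" using a1 by (rule summable_mult2)
    qed
    have "(\<lambda>n. \<alpha> n *\<^sub>R (z \<circ> r') n) sums (\<Sum>n. \<alpha> n *\<^sub>R (z \<circ> r') n)" using sz by (rule summable_sums)
    then have "(\<lambda>n. \<beta> n *\<^sub>R (z \<circ> r) n) sums (\<Sum>n. \<alpha> n *\<^sub>R (z \<circ> r') n)"
      using reindex_sums[of M "\<lambda>n. \<alpha> n *\<^sub>R (z \<circ> r') n" g "\<lambda>i. \<beta> i *\<^sub>R (z \<circ> r) i"] a0 gsm bg b0 rg
      by simp
    then have "(\<Sum>n. \<beta> n *\<^sub>R (z \<circ> r) n) = (\<Sum>n. \<alpha> n *\<^sub>R (z \<circ> r') n)" by (simp add: sums_iff)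
    then show "a \<in> cmset (z \<circ> r) m" unfolding cmset_def aa using bm b1
      by (intro CollectI exI[where x=\<beta>]) simp
  qed
  have "c_m (z \<circ> r) m \<le> c_m (z \<circ> r') M"
    unfolding c_m_cmset by (rule cInf_superset_mono[OF cmset_ne cmset_bdd sub])
  also have "\<dots> \<le> c_J (z \<circ> r')" by (rule cJ_upper[OF sm_bounded[OF bz]])
  finally show "c_m (z \<circ> r) m \<le> c_J (z \<circ> r')" .
qed

lemma sub_mono:
  fixes z :: "nat \<Rightarrow> 'a::banach"
  assumes "bounded (range z)" "strict_mono t"
  shows "c_J z \<le> c_J (z \<circ> t)"
  using sub_le[OF assms(1) strict_mono_id assms(2), of 0] by simp



lemma tail_tilde:
  fixes z :: "nat \<Rightarrow> 'a::banach"
  assumes bz: "bounded (range z)" and r: "strict_mono r" and r': "strict_mono r'"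
    and ev: "\<And>j. K \<le> j \<Longrightarrow> r' j \<in> range r"
  shows "c_J (z \<circ> r') \<le> c_J_tilde (z \<circ> r)"
proof -
  define g where "g = (\<lambda>j. inv r (r' (j + K)))"
  have rg: "r (g j) = r' (j + K)" for j
    unfolding g_def using ev[of "j+K"] by (auto simp: f_inv_into_f)
  have gsm: "strict_mono g"
  proof (rule strict_monoI)
    fix a b :: nat assume "a < b"
    then have "r' (a + K) < r' (b + K)" using r' by (simp add: strict_mono_less)
    then have "r (g a) < r (g b)" using rg by simp
    then show "g a < g b" using r by (simp add: strict_mono_less)
  qed
  have rgsm: "strict_mono (r \<circ> g)" using r gsm by (rule strict_mono_o)
  have "c_J (z \<circ> r') \<le> c_J (z \<circ> (r \<circ> g))"
    by (rule sub_le[OF bz r' rgsm, of 0]) (simp add: rg)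
  also have "\<dots> = c_J ((z \<circ> r) \<circ> g)" by (simp add: o_assoc)
  also have "\<dots> \<le> c_J_tilde (z \<circ> r)" by (rule tilde_upper[OF sm_bounded[OF bz] gsm])
  finally show ?thesis .
qed

lemma stab:
  fixes x :: "nat \<Rightarrow> 'a::banach"
  assumes bx: "bounded (range x)" and e0: "0 < \<epsilon>"
  shows "\<exists>d. strict_mono d \<and> c_J_tilde (x \<circ> d) \<le> c_J (x \<circ> d) \<and> (1 - \<epsilon>) * c_J_tilde x \<le> c_J (x \<circ> d)"
proof -
  define \<theta> where "\<theta> = (if c_J_tilde x > 0 then \<epsilon> * c_J_tilde x else 1)"
  have th0: "0 < \<theta>" unfolding \<theta>_def using e0 by auto
  define \<eta> where "\<eta> = (\<lambda>k::nat. \<theta> / (real k + 1))"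
  have eta0: "0 < \<eta> k" for k unfolding \<eta>_def using th0 by simp
  have step: "\<exists>t. strict_mono s \<longrightarrow> strict_mono t \<and> c_J_tilde (x \<circ> s) - \<eta> k < c_J ((x \<circ> s) \<circ> t)" for s k
  proof (cases "strict_mono s")
    case True
    have ne: "{c_J ((x \<circ> s) \<circ> r) | r. strict_mono r} \<noteq> {}" using strict_mono_id by blast
    have "c_J_tilde (x \<circ> s) - \<eta> k < Sup {c_J ((x \<circ> s) \<circ> r) | r. strict_mono r}"
      using eta0[of k] unfolding c_J_tilde_def by simp
    then obtain v where "v \<in> {c_J ((x \<circ> s) \<circ> r) | r. strict_mono r}" "c_J_tilde (x \<circ> s) - \<eta> k < v"
      using less_cSup_iff[OF ne tilde_bdd[OF sm_bounded[OF bx]]] by blast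
    then show ?thesis by blast
  qed simp
  obtain T where T: "\<And>s k. strict_mono s \<Longrightarrow> strict_mono (T s k) \<and> c_J_tilde (x \<circ> s) - \<eta> k < c_J ((x \<circ> s) \<circ> T s k)"
    using step by metis
  define S where "S = rec_nat id (\<lambda>k s. s \<circ> T s k)"
  have S0: "S 0 = id" and SS: "S (Suc k) = S k \<circ> T (S k) k" for k unfolding S_def by simp_all
  have Ssm: "strict_mono (S k)" for k
  proof (induction k)
    case 0 then show ?case by (simp add: S0 strict_mono_def)
  next
    case (Suc k) then show ?case unfolding SS by (rule strict_mono_o) (use T[OF Suc] in blast)
  qed
  have Srange: "range (S j) \<subseteq> range (S k)" if "k \<le> j" for k j
    using that
  proof (induction j rule: dec_induct)
    case base then show ?case by simp
  next
    case (step j) then show ?case by (auto simp: SS)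
  qed
  define d where "d = (\<lambda>j. S j j)"
  have dsm: "strict_mono d"
  proof (rule strict_monoI_Suc)
    fix j
    have "Suc j \<le> T (S j) j (Suc j)" using T[OF Ssm[of j], of j] seq_suble by blast
    then have "j < T (S j) j (Suc j)" by simp
    then have "S j j < S j (T (S j) j (Suc j))" using Ssm[of j] by (simp add: strict_mono_less)
    then show "d j < d (Suc j)" unfolding d_def by (simp add: SS)
  qed
  have din: "d j \<in> range (S k)" if "k \<le> j" for k j
    using Srange[OF that] unfolding d_def by auto
  have A: "c_J (x \<circ> S (Suc k)) \<le> c_J (x \<circ> d)" for k
    by (rule sub_le[OF bx Ssm dsm, of "Suc k"]) (rule din)
  have B: "c_J ((x \<circ> d) \<circ> t) \<le> c_J_tilde (x \<circ> S k)" if t: "strict_mono t" for k t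
  proof -
    have dt: "strict_mono (d \<circ> t)" using dsm t by (rule strict_mono_o)
    have "c_J (x \<circ> (d \<circ> t)) \<le> c_J_tilde (x \<circ> S k)"
    proof (rule tail_tilde[OF bx Ssm dt, of k])
      fix j assume "k \<le> j"
      moreover have "j \<le> t j" using t by (rule seq_suble)
      ultimately show "(d \<circ> t) j \<in> range (S k)" using din by simp
    qed
    then show ?thesis by (simp add: o_assoc)
  qed
  have C: "c_J_tilde (x \<circ> S k) - \<eta> k < c_J (x \<circ> S (Suc k))" for k
    using T[OF Ssm[of k], of k] by (simp add: SS o_assoc)
  have D: "c_J ((x \<circ> d) \<circ> t) \<le> c_J (x \<circ> d)" if t: "strict_mono t" for t
  proof (rule ccontr)
    assume "\<not> ?thesis"
    then have gp: "0 < c_J ((x \<circ> d) \<circ> t) - c_J (x \<circ> d)" by simp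
    obtain k where k: "\<theta> / (c_J ((x \<circ> d) \<circ> t) - c_J (x \<circ> d)) < real k" using reals_Archimedean2 by blast
    have "\<theta> < (c_J ((x \<circ> d) \<circ> t) - c_J (x \<circ> d)) * real k" using k gp by (simp add: divide_less_eq mult.commute)
    also have "\<dots> \<le> (c_J ((x \<circ> d) \<circ> t) - c_J (x \<circ> d)) * (real k + 1)" using gp by simp
    finally have "\<eta> k < c_J ((x \<circ> d) \<circ> t) - c_J (x \<circ> d)" unfolding \<eta>_def by (simp add: divide_less_eq mult.commute)
    moreover have "c_J ((x \<circ> d) \<circ> t) < c_J (x \<circ> d) + \<eta> k" using B[OF t, of k] C[of k] A[of k] by simp
    ultimately show False by simp
  qed
  have E: "c_J_tilde (x \<circ> d) \<le> c_J (x \<circ> d)" by (rule tilde_least) (rule D)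
  have F: "c_J_tilde x - \<theta> < c_J (x \<circ> d)"
    using C[of 0] A[of 0] unfolding \<eta>_def by (simp add: S0)
  have G: "(1 - \<epsilon>) * c_J_tilde x \<le> c_J (x \<circ> d)"
  proof (cases "c_J_tilde x > 0")
    case True then show ?thesis using F unfolding \<theta>_def by (simp add: algebra_simps)
  next
    case False
    then have "c_J_tilde x = 0" using cJ_le_tilde[OF bx] cJ_nonneg[OF bx] by simp
    then show ?thesis using cJ_nonneg[OF sm_bounded[OF bx]] by simp
  qed
  show ?thesis using dsm E G by blast
qed



lemma wc_bounded:
  fixes y :: "nat \<Rightarrow> 'a::banach"
  assumes wc: "\<And>f :: 'a \<Rightarrow> real. bounded_linear f \<Longrightarrow> Cauchy (\<lambda>n. f (y n))"
  shows "bounded (range y)"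
proof -
  define F where "F = (\<lambda>k::nat. {\<phi> :: 'a \<Rightarrow>\<^sub>L real. \<forall>n. \<bar>blinfun_apply \<phi> (y n)\<bar> \<le> real k})"
  have clo: "closed (F k)" for k
  proof -
    have "F k = (\<Inter>n. {\<phi> :: 'a \<Rightarrow>\<^sub>L real. \<bar>blinfun_apply \<phi> (y n)\<bar> \<le> real k})" unfolding F_def by auto
    moreover have "closed {\<phi> :: 'a \<Rightarrow>\<^sub>L real. \<bar>blinfun_apply \<phi> (y n)\<bar> \<le> real k}" for n
      by (intro closed_Collect_le continuous_intros)
    ultimately show ?thesis by auto
  qed
  have cov: "\<exists>k. \<phi> \<in> F k" for \<phi>
  proof -
    have "Cauchy (\<lambda>n. blinfun_apply \<phi> (y n))" by (rule wc) (rule blinfun.bounded_linear_right)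
    then have "Bseq (\<lambda>n. blinfun_apply \<phi> (y n))" by (rule Cauchy_Bseq)
    then obtain K where K: "\<And>n. norm (blinfun_apply \<phi> (y n)) \<le> K" unfolding Bseq_def by blast
    have "\<bar>blinfun_apply \<phi> (y n)\<bar> \<le> real (nat \<lceil>K\<rceil>)" for n
      using K[of n] by (simp add: real_nat_ceiling_ge order_trans)
    then show ?thesis unfolding F_def by blast
  qed
  have "\<exists>k. euclidean interior_of (F k) \<noteq> {}"
  proof (rule ccontr)
    assume "\<not> ?thesis"
    then have "\<And>T. T \<in> range F \<Longrightarrow> closedin euclidean T \<and> euclidean interior_of T = {}"
      using clo by auto
    then have "euclidean interior_of \<Union>(range F) = {}"
      by (intro Baire_category_alt) (auto simp: completely_metrizable_space_euclidean)
    moreover have "\<Union>(range F) = UNIV" using cov by auto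
    ultimately show False by simp
  qed
  then obtain k \<phi>0 where "\<phi>0 \<in> euclidean interior_of (F k)" by blast
  then obtain T where T: "open T" "\<phi>0 \<in> T" "T \<subseteq> F k" unfolding interior_of_def by auto
  then obtain \<rho> where \<rho>: "0 < \<rho>" "ball \<phi>0 \<rho> \<subseteq> T" using open_contains_ball by blast
  have "norm (y n) \<le> 4 * real k / \<rho>" for n
  proof -
    obtain h where h: "bounded_linear h" "\<And>w. \<bar>h w\<bar> \<le> norm w" "h (y n) = norm (y n)"
      using norming[of "y n"] by blast
    define \<psi> where "\<psi> = Blinfun h"
    have \<psi>a: "blinfun_apply \<psi> = h" unfolding \<psi>_def using h(1) by (rule bounded_linear_Blinfun_apply)
    have n\<psi>: "norm \<psi> \<le> 1" by (rule norm_blinfun_bound) (use h(2) \<psi>a in auto)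
    define \<phi>1 where "\<phi>1 = \<phi>0 + (\<rho>/2) *\<^sub>R \<psi>"
    have "dist \<phi>0 \<phi>1 = \<rho>/2 * norm \<psi>" unfolding \<phi>1_def dist_norm using \<rho> by simp
    also have "\<rho>/2 * norm \<psi> \<le> \<rho>/2 * 1" by (rule mult_left_mono) (use n\<psi> \<rho> in auto)
    also have "\<dots> < \<rho>" using \<rho> by simp
    finally have "\<phi>1 \<in> ball \<phi>0 \<rho>" by simp
    then have "\<phi>1 \<in> F k" using \<rho>(2) T(3) by blast
    then have 1: "\<bar>blinfun_apply \<phi>1 (y n)\<bar> \<le> real k" unfolding F_def by blast
    have 2: "\<bar>blinfun_apply \<phi>0 (y n)\<bar> \<le> real k" using T unfolding F_def by blast
    have "blinfun_apply \<phi>1 (y n) = blinfun_apply \<phi>0 (y n) + \<rho>/2 * norm (y n)"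
      unfolding \<phi>1_def using \<psi>a h(3) by (simp add: blinfun.add_left blinfun.scaleR_left)
    then have "\<rho>/2 * norm (y n) \<le> 2 * real k" using 1 2 by linarith
    then show ?thesis using \<rho> by (simp add: field_simps)
  qed
  then show ?thesis unfolding bounded_iff by blast
qed



lemma block_lemma:
  fixes x :: "nat \<Rightarrow> 'a::banach"
  assumes bx: "bounded (range x)" and ce: "c_J x < e"
  shows "\<exists>N>M. \<exists>\<rho>. (\<Sum>i\<in>{M..<N}. \<bar>\<rho> i\<bar>) = 1 \<and> norm (\<Sum>i\<in>{M..<N}. \<rho> i *\<^sub>R x i) \<le> e
           \<and> (\<Sum>i\<in>{M..<N}. \<rho> i) = 0"
proof -
  have "c_m x M < e" using cJ_upper[OF bx, of M] ce by simp
  then obtain N1 \<beta>1 where N1: "M < N1" and b1: "(\<Sum>i\<in>{M..<N1}. \<bar>\<beta>1 i\<bar>) = 1"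
    and n1: "norm (\<Sum>i\<in>{M..<N1}. \<beta>1 i *\<^sub>R x i) < e" using cm_fin_approx[OF bx] by blast
  have "c_m x N1 < e" using cJ_upper[OF bx, of N1] ce by simp
  then obtain N2 \<beta>2 where N2: "N1 < N2" and b2: "(\<Sum>i\<in>{N1..<N2}. \<bar>\<beta>2 i\<bar>) = 1"
    and n2: "norm (\<Sum>i\<in>{N1..<N2}. \<beta>2 i *\<^sub>R x i) < e" using cm_fin_approx[OF bx] by blast
  define \<sigma>1 where "\<sigma>1 = (\<Sum>i\<in>{M..<N1}. \<beta>1 i)"
  define \<sigma>2 where "\<sigma>2 = (\<Sum>i\<in>{N1..<N2}. \<beta>2 i)"
  define s1 where "s1 = (if 0 \<le> \<sigma>1 then 1 else -1::real)"
  define s2 where "s2 = (if 0 \<le> \<sigma>2 then 1 else -1::real)"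
  have as1: "\<bar>s1\<bar> = 1" "s1 * \<sigma>1 = \<bar>\<sigma>1\<bar>" unfolding s1_def by auto
  have as2: "\<bar>s2\<bar> = 1" "s2 * \<sigma>2 = \<bar>\<sigma>2\<bar>" unfolding s2_def by auto
  define a where "a = (if \<bar>\<sigma>1\<bar> + \<bar>\<sigma>2\<bar> = 0 then 1/2 else \<bar>\<sigma>2\<bar> / (\<bar>\<sigma>1\<bar> + \<bar>\<sigma>2\<bar>))"
  define b where "b = 1 - a"
  have a0: "0 \<le> a" and b0: "0 \<le> b" unfolding b_def a_def by (auto simp: divide_simps)
  have ab: "a * \<bar>\<sigma>1\<bar> = b * \<bar>\<sigma>2\<bar>"
  proof (cases "\<bar>\<sigma>1\<bar> + \<bar>\<sigma>2\<bar> = 0")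
    case True
    then have "\<bar>\<sigma>1\<bar> = 0" "\<bar>\<sigma>2\<bar> = 0" using abs_ge_zero[of \<sigma>1] abs_ge_zero[of \<sigma>2] by linarith+
    then show ?thesis by simp
  next
    case False
    then have p: "\<bar>\<sigma>1\<bar> + \<bar>\<sigma>2\<bar> > 0" by simp
    then show ?thesis unfolding b_def a_def using False by (simp add: field_simps)
  qed
  define \<rho> where "\<rho> = (\<lambda>i. if i < N1 then a * s1 * \<beta>1 i else - (b * s2 * \<beta>2 i))"
  have split: "(\<Sum>i\<in>{M..<N2}. g i) = (\<Sum>i\<in>{M..<N1}. g i) + (\<Sum>i\<in>{N1..<N2}. g i)" for g :: "nat \<Rightarrow> 'b::comm_monoid_add"
    using sum.atLeastLessThan_concat[of M N1 N2 g] N1 N2 by simp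
  have r1: "(\<Sum>i\<in>{M..<N1}. g i (\<rho> i)) = (\<Sum>i\<in>{M..<N1}. g i (a * s1 * \<beta>1 i))" for g :: "nat \<Rightarrow> real \<Rightarrow> 'b::comm_monoid_add"
    by (rule sum.cong) (auto simp: \<rho>_def)
  have r2: "(\<Sum>i\<in>{N1..<N2}. g i (\<rho> i)) = (\<Sum>i\<in>{N1..<N2}. g i (- (b * s2 * \<beta>2 i)))" for g :: "nat \<Rightarrow> real \<Rightarrow> 'b::comm_monoid_add"
    by (rule sum.cong) (auto simp: \<rho>_def)
  have "(\<Sum>i\<in>{M..<N2}. \<bar>\<rho> i\<bar>) = (\<Sum>i\<in>{M..<N1}. \<bar>a * s1 * \<beta>1 i\<bar>) + (\<Sum>i\<in>{N1..<N2}. \<bar>- (b * s2 * \<beta>2 i)\<bar>)"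
    using split[of "\<lambda>i. \<bar>\<rho> i\<bar>"] r1[of "\<lambda>i t. \<bar>t\<bar>"] r2[of "\<lambda>i t. \<bar>t\<bar>"] by simp
  also have "\<dots> = a * (\<Sum>i\<in>{M..<N1}. \<bar>\<beta>1 i\<bar>) + b * (\<Sum>i\<in>{N1..<N2}. \<bar>\<beta>2 i\<bar>)"
    using a0 b0 as1 as2 by (simp add: abs_mult sum_distrib_left)
  also have "\<dots> = 1" using b1 b2 unfolding b_def by simp
  finally have R1: "(\<Sum>i\<in>{M..<N2}. \<bar>\<rho> i\<bar>) = 1" .
  have "(\<Sum>i\<in>{M..<N2}. \<rho> i *\<^sub>R x i) = (\<Sum>i\<in>{M..<N1}. (a * s1 * \<beta>1 i) *\<^sub>R x i) + (\<Sum>i\<in>{N1..<N2}. (- (b * s2 * \<beta>2 i)) *\<^sub>R x i)"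
    using split[of "\<lambda>i. \<rho> i *\<^sub>R x i"] r1[of "\<lambda>i t. t *\<^sub>R x i"] r2[of "\<lambda>i t. t *\<^sub>R x i"] by simp
  also have "\<dots> = (a * s1) *\<^sub>R (\<Sum>i\<in>{M..<N1}. \<beta>1 i *\<^sub>R x i) - (b * s2) *\<^sub>R (\<Sum>i\<in>{N1..<N2}. \<beta>2 i *\<^sub>R x i)"
    by (simp add: scaleR_sum_right sum_negf)
  finally have "norm (\<Sum>i\<in>{M..<N2}. \<rho> i *\<^sub>R x i) \<le> norm ((a * s1) *\<^sub>R (\<Sum>i\<in>{M..<N1}. \<beta>1 i *\<^sub>R x i)) + norm ((b * s2) *\<^sub>R (\<Sum>i\<in>{N1..<N2}. \<beta>2 i *\<^sub>R x i))"
    by (metis norm_triangle_ineq4)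
  also have "\<dots> = a * norm (\<Sum>i\<in>{M..<N1}. \<beta>1 i *\<^sub>R x i) + b * norm (\<Sum>i\<in>{N1..<N2}. \<beta>2 i *\<^sub>R x i)"
    using a0 b0 as1 as2 by (simp add: abs_mult)
  also have "\<dots> \<le> a * e + b * e"
    using n1 n2 a0 b0 by (intro add_mono mult_left_mono) auto
  also have "\<dots> = e" unfolding b_def by (simp add: algebra_simps)
  finally have R2: "norm (\<Sum>i\<in>{M..<N2}. \<rho> i *\<^sub>R x i) \<le> e" .
  have "(\<Sum>i\<in>{M..<N2}. \<rho> i) = (\<Sum>i\<in>{M..<N1}. a * s1 * \<beta>1 i) + (\<Sum>i\<in>{N1..<N2}. - (b * s2 * \<beta>2 i))"
    using split[of "\<lambda>i. \<rho> i"] r1[of "\<lambda>i t. t"] r2[of "\<lambda>i t. t"] by simp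
  also have "\<dots> = a * (s1 * \<sigma>1) - b * (s2 * \<sigma>2)"
    unfolding \<sigma>1_def \<sigma>2_def by (simp add: sum_distrib_left sum_negf mult.assoc)
  also have "\<dots> = 0" using ab as1 as2 by simp
  finally have R3: "(\<Sum>i\<in>{M..<N2}. \<rho> i) = 0" .
  show ?thesis using R1 R2 R3 N1 N2 by (intro exI[where x=N2]) auto
qed

lemma pert_core:
  fixes x y :: "nat \<Rightarrow> 'a::banach"
  assumes bx: "bounded (range x)"
    and wc: "\<And>f :: 'a \<Rightarrow> real. bounded_linear f \<Longrightarrow> Cauchy (\<lambda>n. f (y n))"
    and ce: "c_J x < e" and d0: "0 < \<delta>"
  shows "c_m (\<lambda>n. x n + y n) m \<le> e + \<delta>"
proof -
  define P where "P = (\<lambda>M N (\<rho>::nat\<Rightarrow>real). M < N \<and> (\<Sum>i\<in>{M..<N}. \<bar>\<rho> i\<bar>) = 1 \<and> norm (\<Sum>i\<in>{M..<N}. \<rho> i *\<^sub>R x i) \<le> e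
           \<and> (\<Sum>i\<in>{M..<N}. \<rho> i) = 0)"
  have "\<forall>M. \<exists>N. \<exists>\<rho>. P M N \<rho>" unfolding P_def using block_lemma[OF bx ce] by blast
  then obtain Nf where "\<forall>M. \<exists>\<rho>. P M (Nf M) \<rho>" by (rule choice[THEN exE])
  then obtain \<rho>f where PF: "\<forall>M. P M (Nf M) (\<rho>f M)" by (rule choice[THEN exE])
  have NF: "\<And>M. M < Nf M" and RF1: "\<And>M. (\<Sum>i\<in>{M..<Nf M}. \<bar>\<rho>f M i\<bar>) = 1"
    and RF2: "\<And>M. norm (\<Sum>i\<in>{M..<Nf M}. \<rho>f M i *\<^sub>R x i) \<le> e"
    and RF3: "\<And>M. (\<Sum>i\<in>{M..<Nf M}. \<rho>f M i) = 0"
    using PF unfolding P_def by auto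
  define Mb where "Mb = rec_nat m (\<lambda>_ k. Nf k)"
  have Mb0: "Mb 0 = m" and MbS: "Mb (Suc j) = Nf (Mb j)" for j unfolding Mb_def by simp_all
  have Mbsm: "strict_mono Mb" by (rule strict_monoI_Suc) (simp add: MbS NF)
  define B where "B = (\<lambda>j. {Mb j..<Mb (Suc j)})"
  define \<rho> where "\<rho> = (\<lambda>j. \<rho>f (Mb j))"
  have R1: "(\<Sum>i\<in>B j. \<bar>\<rho> j i\<bar>) = 1" and R2: "norm (\<Sum>i\<in>B j. \<rho> j i *\<^sub>R x i) \<le> e"
    and R3: "(\<Sum>i\<in>B j. \<rho> j i) = 0" for j
    unfolding B_def \<rho>_def MbS by (rule RF1 RF2 RF3)+
  have disj: "j = j'" if "i \<in> B j" "i \<in> B j'" for i j j'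
  proof (rule ccontr)
    assume "j \<noteq> j'"
    then consider "Suc j \<le> j'" | "Suc j' \<le> j" by linarith
    then show False
    proof cases
      case 1
      then have "Mb (Suc j) \<le> Mb j'" using Mbsm by (simp add: strict_mono_less_eq)
      then show False using that unfolding B_def by auto
    next
      case 2
      then have "Mb (Suc j') \<le> Mb j" using Mbsm by (simp add: strict_mono_less_eq)
      then show False using that unfolding B_def by auto
    qed
  qed
  define w where "w = (\<lambda>j. \<Sum>i\<in>B j. \<rho> j i *\<^sub>R y i)"
  have wn: "(\<lambda>j. f (w j)) \<longlonglongrightarrow> 0" if f: "bounded_linear f" for f :: "'a \<Rightarrow> real"
  proof (rule LIMSEQ_I)
    fix r :: real assume r: "0 < r"
    have cf: "Cauchy (\<lambda>n. f (y n))" by (rule wc[OF f])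
    have r2: "0 < r/2" using r by simp
    obtain N0 where N0': "\<forall>a\<ge>N0. \<forall>b\<ge>N0. norm (f (y a) - f (y b)) < r/2" using CauchyD[OF cf r2] by blast
    have N0: "\<bar>f (y a) - f (y b)\<bar> < r / 2" if "N0 \<le> a" "N0 \<le> b" for a b using N0' that by simp
    show "\<exists>no. \<forall>j\<ge>no. norm (f (w j) - 0) < r"
    proof (intro exI allI impI)
      fix j assume j: "N0 \<le> j"
      have jm: "j \<le> Mb j" using Mbsm by (rule seq_suble)
      have "f (w j) = (\<Sum>i\<in>B j. \<rho> j i * f (y i))"
        unfolding w_def by (subst linear_sum[OF bounded_linear.linear[OF f]]) (simp add: linear_scale[OF bounded_linear.linear[OF f]])
      also have "\<dots> = (\<Sum>i\<in>B j. \<rho> j i * (f (y i) - f (y (Mb j))))"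
        using R3[of j] by (simp add: right_diff_distrib sum_subtractf sum_distrib_right[symmetric])
      finally have "\<bar>f (w j)\<bar> \<le> (\<Sum>i\<in>B j. \<bar>\<rho> j i * (f (y i) - f (y (Mb j)))\<bar>)"
        by (simp add: sum_abs)
      also have "\<dots> \<le> (\<Sum>i\<in>B j. \<bar>\<rho> j i\<bar> * (r / 2))"
      proof (rule sum_mono)
        fix i assume "i \<in> B j"
        then have "N0 \<le> i" using j jm unfolding B_def by auto
        then have "\<bar>f (y i) - f (y (Mb j))\<bar> \<le> r / 2" using N0[of i "Mb j"] j jm by fastforce
        then show "\<bar>\<rho> j i * (f (y i) - f (y (Mb j)))\<bar> \<le> \<bar>\<rho> j i\<bar> * (r / 2)"
          unfolding abs_mult by (rule mult_left_mono) simp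
      qed
      also have "\<dots> = (\<Sum>i\<in>B j. \<bar>\<rho> j i\<bar>) * (r / 2)" by (rule sum_distrib_right[symmetric])
      also have "\<dots> = r / 2" using R1[of j] by simp
      finally show "norm (f (w j) - 0) < r" using r by simp
    qed
  qed
  obtain J l where l0: "\<forall>j. 0 \<le> l j" and l1: "(\<Sum>j<J. l j) = 1" and lw: "norm (\<Sum>j<J. l j *\<^sub>R w j) < \<delta>"
    using mazur[where u=w and \<delta>=\<delta>, OF wn d0] by blast
  define \<beta> where "\<beta> = (\<lambda>i. \<Sum>j<J. l j * (if i \<in> B j then \<rho> j i else 0))"
  have beta: "\<beta> i = l j * \<rho> j i" if "i \<in> B j" "j < J" for i j
  proof -
    have "\<beta> i = (\<Sum>j'<J. if j' = j then l j * \<rho> j i else 0)"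
      unfolding \<beta>_def by (rule sum.cong) (use that disj in auto)
    also have "\<dots> = l j * \<rho> j i" using that by simp
    finally show ?thesis .
  qed
  have key: "(\<Sum>i\<in>{m..<Mb K}. g i (\<beta> i)) = (\<Sum>j<K. \<Sum>i\<in>B j. g i (l j * \<rho> j i))"
    if "K \<le> J" for K and g :: "nat \<Rightarrow> real \<Rightarrow> 'b::comm_monoid_add"
    using that
  proof (induction K)
    case 0 then show ?case by (simp add: Mb0)
  next
    case (Suc K)
    have "m \<le> Mb K" using Mbsm Mb0 by (metis le0 strict_mono_less_eq)
    moreover have "Mb K \<le> Mb (Suc K)" using Mbsm by (simp add: strict_mono_less_eq)
    ultimately have "(\<Sum>i\<in>{m..<Mb (Suc K)}. g i (\<beta> i)) = (\<Sum>i\<in>{m..<Mb K}. g i (\<beta> i)) + (\<Sum>i\<in>B K. g i (\<beta> i))"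
      unfolding B_def by (rule sum.atLeastLessThan_concat[symmetric])
    also have "(\<Sum>i\<in>B K. g i (\<beta> i)) = (\<Sum>i\<in>B K. g i (l K * \<rho> K i))"
      by (rule sum.cong) (use beta Suc.prems in auto)
    finally show ?case using Suc by simp
  qed
  have S1: "(\<Sum>i\<in>{m..<Mb J}. \<bar>\<beta> i\<bar>) = 1"
  proof -
    have "(\<Sum>i\<in>{m..<Mb J}. \<bar>\<beta> i\<bar>) = (\<Sum>j<J. \<Sum>i\<in>B j. \<bar>l j * \<rho> j i\<bar>)"
      using key[of J "\<lambda>i t. \<bar>t\<bar>"] by simp
    also have "\<dots> = (\<Sum>j<J. l j)" using l0 R1 by (simp add: abs_mult sum_distrib_left[symmetric])
    finally show ?thesis using l1 by simp
  qed
  have SV: "(\<Sum>i\<in>{m..<Mb J}. \<beta> i *\<^sub>R v i) = (\<Sum>j<J. l j *\<^sub>R (\<Sum>i\<in>B j. \<rho> j i *\<^sub>R v i))" for v :: "nat \<Rightarrow> 'a"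
    using key[of J "\<lambda>i t. t *\<^sub>R v i"] by (simp add: scaleR_sum_right)
  have "norm (\<Sum>i\<in>{m..<Mb J}. \<beta> i *\<^sub>R x i) \<le> (\<Sum>j<J. norm (l j *\<^sub>R (\<Sum>i\<in>B j. \<rho> j i *\<^sub>R x i)))"
    unfolding SV by (rule norm_sum)
  also have "\<dots> \<le> (\<Sum>j<J. l j * e)"
    by (rule sum_mono) (use l0 R2 in \<open>simp add: mult_left_mono\<close>)
  also have "\<dots> = e" using l1 by (simp add: sum_distrib_right[symmetric])
  finally have nx: "norm (\<Sum>i\<in>{m..<Mb J}. \<beta> i *\<^sub>R x i) \<le> e" .
  have ny: "norm (\<Sum>i\<in>{m..<Mb J}. \<beta> i *\<^sub>R y i) < \<delta>" unfolding SV using lw unfolding w_def by simp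
  have "(\<Sum>i\<in>{m..<Mb J}. \<beta> i *\<^sub>R (x i + y i)) = (\<Sum>i\<in>{m..<Mb J}. \<beta> i *\<^sub>R x i) + (\<Sum>i\<in>{m..<Mb J}. \<beta> i *\<^sub>R y i)"
    by (simp add: scaleR_add_right sum.distrib)
  then have "norm (\<Sum>i\<in>{m..<Mb J}. \<beta> i *\<^sub>R (x i + y i)) \<le> e + \<delta>"
    using nx ny norm_triangle_ineq[of "\<Sum>i\<in>{m..<Mb J}. \<beta> i *\<^sub>R x i" "\<Sum>i\<in>{m..<Mb J}. \<beta> i *\<^sub>R y i"] by simp
  moreover have "c_m (\<lambda>n. x n + y n) m \<le> norm (\<Sum>i\<in>{m..<Mb J}. \<beta> i *\<^sub>R (x i + y i))"
    using cm_fin_upper[OF S1, where z="\<lambda>n. x n + y n"] by simp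
  ultimately show ?thesis by simp
qed

lemma pert_le:
  fixes x y :: "nat \<Rightarrow> 'a::banach"
  assumes bx: "bounded (range x)"
    and wc: "\<And>f :: 'a \<Rightarrow> real. bounded_linear f \<Longrightarrow> Cauchy (\<lambda>n. f (y n))"
  shows "c_J (\<lambda>n. x n + y n) \<le> c_J x"
proof (rule cJ_least)
  fix m
  show "c_m (\<lambda>n. x n + y n) m \<le> c_J x"
  proof (rule field_le_epsilon)
    fix t :: real assume t: "0 < t"
    have "c_m (\<lambda>n. x n + y n) m \<le> (c_J x + t/2) + t/2"
      by (rule pert_core[where e="c_J x + t/2" and \<delta>="t/2"]) (use bx wc t in auto)
    then show "c_m (\<lambda>n. x n + y n) m \<le> c_J x + t" by simp
  qed
qed



lemma wc_of:
  assumes "weakly_Cauchy y" shows "\<And>f :: 'a::real_normed_vector \<Rightarrow> real. bounded_linear f \<Longrightarrow> Cauchy (\<lambda>n. f (y n))"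
  using assms unfolding weakly_Cauchy_def by blast

lemma pert_eq:
  fixes x y :: "nat \<Rightarrow> 'a::banach"
  assumes bx: "bounded (range x)"
    and wc: "\<And>f :: 'a \<Rightarrow> real. bounded_linear f \<Longrightarrow> Cauchy (\<lambda>n. f (y n))"
  shows "c_J (\<lambda>n. x n + y n) = c_J x"
proof (rule antisym)
  show "c_J (\<lambda>n. x n + y n) \<le> c_J x" by (rule pert_le[OF bx wc])
  have by': "bounded (range y)" by (rule wc_bounded[OF wc])
  obtain Bx where Bx: "\<And>n. norm (x n) \<le> Bx" using bounded_bound[OF bx] by blast
  obtain By where By: "\<And>n. norm (y n) \<le> By" using bounded_bound[OF by'] by blast
  have bxy: "bounded (range (\<lambda>n. x n + y n))" unfolding bounded_iff
  proof (intro exI ballI)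
    fix v assume "v \<in> range (\<lambda>n. x n + y n)"
    then obtain n where "v = x n + y n" by blast
    then show "norm v \<le> Bx + By" using Bx[of n] By[of n] norm_triangle_ineq[of "x n" "y n"] by simp
  qed
  have wc': "Cauchy (\<lambda>n. f (- y n))" if f: "bounded_linear f" for f :: "'a \<Rightarrow> real"
  proof -
    have c: "Cauchy (\<lambda>n. f (y n))" by (rule wc[OF f])
    have "(\<lambda>n. f (- y n)) = (\<lambda>n. - f (y n))" using linear_neg[OF bounded_linear.linear[OF f]] by simp
    moreover have "Cauchy (\<lambda>n. - f (y n))" using c unfolding Cauchy_iff
      by (metis minus_diff_eq minus_diff_minus norm_minus_commute)
    ultimately show ?thesis by simp
  qed
  have "c_J (\<lambda>n. (x n + y n) + - y n) \<le> c_J (\<lambda>n. x n + y n)" by (rule pert_le[OF bxy wc'])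
  then show "c_J x \<le> c_J (\<lambda>n. x n + y n)" by simp
qed

theorem lemma5p3:
  fixes x y :: "nat \<Rightarrow> 'a::banach" and \<epsilon> :: real
  assumes "bounded (range x)" and "weakly_Cauchy y" and "0 < \<epsilon>" and "\<epsilon> < 1"
  shows "\<exists>r. strict_mono r
     \<and> c_J_stable (x \<circ> r) \<and> c_J_stable (\<lambda>k. x (r k) + y (r k))
     \<and> (1 - \<epsilon>) * c_J_tilde x \<le> c_J (x \<circ> r) \<and> c_J (x \<circ> r) \<le> c_J_tilde x
     \<and> c_J (\<lambda>k. x (r k) + y (r k)) = c_J (x \<circ> r)"
proof -
  note bx = assms(1)
  note wc = wc_of[OF assms(2)]
  obtain r where r: "strict_mono r" and st: "c_J_tilde (x \<circ> r) \<le> c_J (x \<circ> r)"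
    and lo: "(1 - \<epsilon>) * c_J_tilde x \<le> c_J (x \<circ> r)"
    using stab[OF bx assms(3)] by blast
  have bxr: "bounded (range (x \<circ> r))" by (rule sm_bounded[OF bx])
  have wcs: "Cauchy (\<lambda>n. f (y (s n)))" if f: "bounded_linear f" and s: "strict_mono s" for f :: "'a \<Rightarrow> real" and s
    using Cauchy_subseq_Cauchy[OF wc[OF f] s] by (simp add: o_def)
  have eqs: "c_J ((\<lambda>k. x (r k) + y (r k)) \<circ> t) = c_J ((x \<circ> r) \<circ> t)" if t: "strict_mono t" for t
  proof -
    have rt: "strict_mono (r \<circ> t)" using r t by (rule strict_mono_o)
    have "c_J (\<lambda>n. (x \<circ> (r \<circ> t)) n + y ((r \<circ> t) n)) = c_J (x \<circ> (r \<circ> t))"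
      by (rule pert_eq[OF sm_bounded[OF bx]]) (rule wcs[OF _ rt])
    then show ?thesis by (simp add: o_def)
  qed
  have E: "c_J (\<lambda>k. x (r k) + y (r k)) = c_J (x \<circ> r)"
    using eqs[OF strict_mono_id] by (simp add: o_def)
  have S1: "c_J_stable (x \<circ> r)"
    unfolding c_J_stable_def using st cJ_le_tilde[OF bxr] by simp
  have "{c_J ((\<lambda>k. x (r k) + y (r k)) \<circ> t) | t. strict_mono t} = {c_J ((x \<circ> r) \<circ> t) | t. strict_mono t}"
    using eqs by metis
  then have "c_J_tilde (\<lambda>k. x (r k) + y (r k)) = c_J_tilde (x \<circ> r)" unfolding c_J_tilde_def by simp
  then have S2: "c_J_stable (\<lambda>k. x (r k) + y (r k))"
    using S1 E unfolding c_J_stable_def by simp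
  have U: "c_J (x \<circ> r) \<le> c_J_tilde x" by (rule tilde_upper[OF bx r])
  show ?thesis using r S1 S2 lo U E by blast
qed


end
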